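(* Fix an aggregator $f:[0,1]^2\to[0,1]$ and a two-signal structure $\theta=(\mu,\alpha_1,\beta_1,\alpha_2,\beta_2)\in\Theta_4$. Define for $\lambda\in(0,1]$ $$u(\lambda)=\Big(1+\big(\tfrac{1-\mu}{\mu}\big)^{1/\lambda}\Big)^{-1},\qquad t_\theta(\lambda)=(u(\lambda),\alpha_1,\beta_1,\alpha_2,\beta_2)\in\Theta_4,$$ and $$\phi_\theta(\lambda)=\mathbb E_{t_\theta(\lambda)}\big[L(f(\mathbf x(\mathbf s,\lambda)),\omega)-L(f^*(\mathbf s),\omega)\big],$$ where the expert reports $\mathbf x(\mathbf s,\lambda)$ and the benchmark $f^*$ are computed with respect to the structure $t_\theta(\lambda)$. Then $\phi_\theta$ is single-troughed on $(0,1]$: it is either monotone, or first monotonically non-increasing and then monotonically non-decreasing.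
   Context: Setting: binary state $\omega\in\{0,1\}$, two experts. $\Theta_4$ is the set of conditionally independent two-signal structures, written as quintuples $(\mu,\alpha_1,\beta_1,\alpha_2,\beta_2)$: signal spaces $\mathcal S_1=\mathcal S_2=\{r,b\}$, $\mu=\Pr[\omega=1]\in(0,1)$, $\alpha_i=\Pr[S_i=r\mid\omega=1]$, $\beta_i=\Pr[S_i=r\mid\omega=0]$, with $S_1,S_2$ conditionally independent given $\omega$. For a structure with prior $\mu'$ and degree $\lambda\in(0,1]$, expert $i$ with signal $s_i$ reports $x_i(s_i,\lambda)=\frac{\mu'^\lambda\Pr[S_i=s_i\mid\omega=1]}{\mu'^\lambda\Pr[S_i=s_i\mid\omega=1]+(1-\mu')^\lambda\Pr[S_i=s_i\mid\omega=0]}$, and $\mathbf x(\mathbf s,\lambda)=(x_1(s_1,\lambda),x_2(s_2,\lambda))$. $f^*(\mathbf s)=\Pr[\omega=1\mid S_1=s_1,S_2=s_2]$ under the structure in question. The loss is $L(y,\omega)=(y-\omega)^2$. *)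

theory Defs
  imports Complex_Main
begin

text \<open>Signals: True = r, False = b. State omega: True = 1, False = 0.\<close>

definition in_Theta4 :: "real \<Rightarrow> real \<Rightarrow> real \<Rightarrow> real \<Rightarrow> real \<Rightarrow> bool" where
  "in_Theta4 \<mu> a1 b1 a2 b2 \<longleftrightarrow> 0 < \<mu> \<and> \<mu> < 1 \<and>
     a1 \<in> {0..1} \<and> b1 \<in> {0..1} \<and> a2 \<in> {0..1} \<and> b2 \<in> {0..1}"

definition sig_prob :: "real \<Rightarrow> bool \<Rightarrow> real" where
  "sig_prob p s = (if s then p else 1 - p)"

definition state_prob :: "real \<Rightarrow> bool \<Rightarrow> real" where
  "state_prob \<mu> w = (if w then \<mu> else 1 - \<mu>)"

text \<open>Report of an expert with Pr[S=r|1]=a, Pr[S=r|0]=b, prior mu', degree lam, signal s.\<close>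
definition report :: "real \<Rightarrow> real \<Rightarrow> real \<Rightarrow> real \<Rightarrow> bool \<Rightarrow> real" where
  "report m' a b lam s =
     (m' powr lam * sig_prob a s) /
     (m' powr lam * sig_prob a s + (1 - m') powr lam * sig_prob b s)"

definition fstar :: "real \<Rightarrow> real \<Rightarrow> real \<Rightarrow> real \<Rightarrow> real \<Rightarrow> bool \<Rightarrow> bool \<Rightarrow> real" where
  "fstar \<mu> a1 b1 a2 b2 s1 s2 =
     (\<mu> * sig_prob a1 s1 * sig_prob a2 s2) /
     (\<mu> * sig_prob a1 s1 * sig_prob a2 s2 + (1 - \<mu>) * sig_prob b1 s1 * sig_prob b2 s2)"

definition joint_prob :: "real \<Rightarrow> real \<Rightarrow> real \<Rightarrow> real \<Rightarrow> real \<Rightarrow> bool \<Rightarrow> bool \<Rightarrow> bool \<Rightarrow> real" where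
  "joint_prob \<mu> a1 b1 a2 b2 w s1 s2 =
     state_prob \<mu> w * sig_prob (if w then a1 else b1) s1 * sig_prob (if w then a2 else b2) s2"

definition sq_loss :: "real \<Rightarrow> bool \<Rightarrow> real" where
  "sq_loss y w = (y - of_bool w)\<^sup>2"

definition u_prior :: "real \<Rightarrow> real \<Rightarrow> real" where
  "u_prior \<mu> lam = 1 / (1 + ((1 - \<mu>) / \<mu>) powr (1 / lam))"

definition phi :: "(real \<Rightarrow> real \<Rightarrow> real) \<Rightarrow> real \<Rightarrow> real \<Rightarrow> real \<Rightarrow> real \<Rightarrow> real \<Rightarrow> real \<Rightarrow> real" where
  "phi f \<mu> a1 b1 a2 b2 lam =
     (let u = u_prior \<mu> lam in
      \<Sum>w\<in>(UNIV::bool set). \<Sum>s1\<in>(UNIV::bool set). \<Sum>s2\<in>(UNIV::bool set).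
        joint_prob u a1 b1 a2 b2 w s1 s2 *
        (sq_loss (f (report u a1 b1 lam s1) (report u a2 b2 lam s2)) w
         - sq_loss (fstar u a1 b1 a2 b2 s1 s2) w))"

definition single_troughed_on :: "real set \<Rightarrow> (real \<Rightarrow> real) \<Rightarrow> bool" where
  "single_troughed_on S g \<longleftrightarrow>
     (\<forall>x\<in>S. \<forall>y\<in>S. x \<le> y \<longrightarrow> g x \<le> g y) \<or>
     (\<forall>x\<in>S. \<forall>y\<in>S. x \<le> y \<longrightarrow> g y \<le> g x) \<or>
     (\<exists>c\<in>S. (\<forall>x\<in>S. \<forall>y\<in>S. x \<le> y \<longrightarrow> y \<le> c \<longrightarrow> g y \<le> g x) \<and>
            (\<forall>x\<in>S. \<forall>y\<in>S. c \<le> x \<longrightarrow> x \<le> y \<longrightarrow> g x \<le> g y))"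

end

theory Submission imports Defs "HOL-Analysis.Analysis" begin

lemma report_u:
  assumes m: "0 < \<mu>" "\<mu> < 1" and l: "0 < lam"
  shows "report (u_prior \<mu> lam) a b lam s = report \<mu> a b 1 s"
proof -
  define r where "r = (1-\<mu>)/\<mu>"
  define k where "k = r powr (1/lam)"
  have r: "r > 0" using m by (simp add: r_def)
  have k: "k > 0" using r by (simp add: k_def)
  have kl: "k powr lam = r" using r l by (simp add: k_def powr_powr)
  have u: "u_prior \<mu> lam = 1/(1+k)" by (simp add: u_prior_def r_def k_def)
  have u1: "1 - u_prior \<mu> lam = k/(1+k)" using k by (simp add: u field_simps)
  define D where "D = (1+k) powr lam"
  have D: "D > 0" using k by (simp add: D_def)
  have p1: "(u_prior \<mu> lam) powr lam = 1/D" using k by (simp add: u D_def powr_divide)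
  have p2: "(1 - u_prior \<mu> lam) powr lam = r/D" using k by (simp add: u1 D_def powr_divide kl)
  have "report (u_prior \<mu> lam) a b lam s = (sig_prob a s / D) / (sig_prob a s / D + r/D * sig_prob b s)"
    by (simp add: report_def p1 p2)
  also have "\<dots> = (sig_prob a s) / (sig_prob a s + r * sig_prob b s)"
    using D by (simp add: add_divide_distrib[symmetric])
  also have "\<dots> = (\<mu> * sig_prob a s) / (\<mu> * (sig_prob a s + r * sig_prob b s))"
    using m by (subst mult_divide_mult_cancel_left) auto
  also have "\<dots> = (\<mu> * sig_prob a s) / (\<mu> * sig_prob a s + (\<mu>*r) * sig_prob b s)"
    by (simp add: ring_distribs)
  also have "\<mu>*r = 1-\<mu>" using m by (simp add: r_def)
  finally show ?thesis using m by (simp add: report_def)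
qed

lemma key_alg:
  fixes X Y C :: real
  assumes "X \<ge> 0" "Y \<ge> 0"
  shows "X*((C-1)^2 - (X/(X+Y) - 1)^2) + Y*(C^2 - (X/(X+Y))^2) = (C*(X+Y) - X)^2/(X+Y)"
proof (cases "X+Y = 0")
  case True then have "X = 0" "Y = 0" using assms by auto
  thus ?thesis by simp
next
  case False
  define S where "S = X+Y"
  define g where "g = X/S"
  have S: "S \<noteq> 0" using False by (simp add: S_def)
  have X: "X = g*S" using S by (simp add: g_def)
  have Y: "Y = (1-g)*S" using S by (simp add: S_def g_def field_simps)
  have "X*((C-1)^2 - (X/(X+Y) - 1)^2) + Y*(C^2 - (X/(X+Y))^2) = g*S*((C-1)^2-(g-1)^2) + (1-g)*S*(C^2-g^2)"
    by (simp add: S_def[symmetric] g_def[symmetric] X[symmetric] Y[symmetric])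
  also have "\<dots> = S*(C-g)^2" by (simp add: power2_eq_square algebra_simps)
  also have "\<dots> = (C*S - g*S)^2/S" using S by (simp add: power2_eq_square field_simps)
  finally show ?thesis by (simp add: S_def[symmetric] X[symmetric])
qed


lemma qc_single:
  fixes g :: "real \<Rightarrow> real"
  assumes q: "\<And>x y z. x \<in> {0<..1} \<Longrightarrow> z \<in> {0<..1} \<Longrightarrow> x \<le> y \<Longrightarrow> y \<le> z \<Longrightarrow> g y \<le> max (g x) (g z)"
    and c: "continuous_on {0<..1} g"
  shows "single_troughed_on {0<..1} g"
proof (cases "\<exists>c\<in>{0<..1}. \<forall>x\<in>{0<..1}. g c \<le> g x")
  case True
  then obtain c where c: "c \<in> {0<..1}" "\<forall>x\<in>{0<..1}. g c \<le> g x" by blast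
  have "(\<forall>x\<in>{0<..1}. \<forall>y\<in>{0<..1}. x \<le> y \<longrightarrow> y \<le> c \<longrightarrow> g y \<le> g x)"
  proof (intro ballI impI)
    fix x y :: real assume "x \<in> {0<..1}" "y \<in> {0<..1}" "x \<le> y" "y \<le> c"
    thus "g y \<le> g x" using q[of x c y] c by force
  qed
  moreover have "(\<forall>x\<in>{0<..1}. \<forall>y\<in>{0<..1}. c \<le> x \<longrightarrow> x \<le> y \<longrightarrow> g x \<le> g y)"
  proof (intro ballI impI)
    fix x y :: real assume "x \<in> {0<..1}" "y \<in> {0<..1}" "c \<le> x" "x \<le> y"
    thus "g x \<le> g y" using q[of c y x] c by force
  qed
  ultimately show ?thesis unfolding single_troughed_on_def using c by blast
next
  case False
  have "\<forall>x\<in>{0<..1}. \<forall>y\<in>{0<..1}. x \<le> y \<longrightarrow> g x \<le> g y"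
  proof (intro ballI impI)
    fix x y :: real assume xy: "x \<in> {0<..1}" "y \<in> {0<..1}" "x \<le> y"
    have sub: "{x..1} \<subseteq> {0<..1}" using xy by auto
    have "\<exists>p\<in>{x..1}. \<forall>y\<in>{x..1}. g p \<le> g y"
      by (rule continuous_attains_inf) (use xy continuous_on_subset[OF c sub] in auto)
    then obtain p where p: "p \<in> {x..1}" "\<forall>y\<in>{x..1}. g p \<le> g y" by blast
    from False p sub obtain z where z: "z \<in> {0<..1}" "g z < g p" by (meson not_le subsetD)
    have "z < x"
    proof (rule ccontr)
      assume "\<not> z < x" hence "z \<in> {x..1}" using z by auto
      thus False using p z by fastforce
    qed
    have "g x \<le> max (g z) (g y)" using q[of z y x] z xy \<open>z < x\<close> by auto
    moreover have "g p \<le> g x" using p xy by auto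
    ultimately show "g x \<le> g y" using z by auto
  qed
  thus ?thesis unfolding single_troughed_on_def by blast
qed

lemma convex_max:
  fixes h :: "real \<Rightarrow> real"
  assumes h: "convex_on I h" and "x \<in> I" "z \<in> I" "x \<le> y" "y \<le> z"
  shows "h y \<le> max (h x) (h z)"
proof (cases "x = z")
  case True thus ?thesis using assms by auto
next
  case False
  define t where "t = (y-x)/(z-x)"
  have t: "0 \<le> t" "t \<le> 1" using assms False by (auto simp: t_def field_simps)
  have tz: "t*(z-x) = y-x" using False by (simp add: t_def)
  have y: "y = (1-t) *\<^sub>R x + t *\<^sub>R z" using tz by (simp add: algebra_simps)
  have "h y \<le> (1-t) * h x + t * h z" unfolding y by (rule convex_onD[OF h]) (use t assms in auto)
  also have "\<dots> \<le> (1-t) * max (h x) (h z) + t * max (h x) (h z)"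
    using t by (intro add_mono mult_left_mono) auto
  finally show ?thesis by (simp add: algebra_simps)
qed

lemma u_range:
  assumes "0 < \<mu>" "\<mu> < 1" "0 < lam"
  shows "u_prior \<mu> lam \<in> {0<..<1}"
proof -
  define k where "k = ((1 - \<mu>) / \<mu>) powr (1 / lam)"
  have "k > 0" using assms by (simp add: k_def)
  hence "0 < 1/(1+k)" "1/(1+k) < 1" by (auto simp: divide_simps)
  thus ?thesis by (simp add: u_prior_def k_def)
qed

lemma u_mono:
  assumes m: "0 < \<mu>" "\<mu> < 1" and xy: "0 < x" "x \<le> y"
  shows "(\<mu> \<le> 1/2 \<longrightarrow> u_prior \<mu> x \<le> u_prior \<mu> y) \<and> (\<mu> \<ge> 1/2 \<longrightarrow> u_prior \<mu> y \<le> u_prior \<mu> x)"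
proof -
  define r where "r = (1-\<mu>)/\<mu>"
  have r: "r > 0" using m by (simp add: r_def)
  have e: "1/y \<le> 1/x" using xy by (simp add: frac_le)
  have kx: "r powr (1/x) > 0" "r powr (1/y) > 0" using r by auto
  have A: "\<mu> \<le> 1/2 \<longrightarrow> r powr (1/y) \<le> r powr (1/x)"
  proof
    assume "\<mu> \<le> 1/2" hence "1 \<le> r" using m by (simp add: r_def field_simps)
    thus "r powr (1/y) \<le> r powr (1/x)" using e by (intro powr_mono) auto
  qed
  have B: "\<mu> \<ge> 1/2 \<longrightarrow> r powr (1/x) \<le> r powr (1/y)"
  proof
    assume "\<mu> \<ge> 1/2" hence "r \<le> 1" using m by (simp add: r_def field_simps)
    thus "r powr (1/x) \<le> r powr (1/y)" using e r by (intro powr_mono') auto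
  qed
  have M: "\<And>a b::real. 0 < a \<Longrightarrow> a \<le> b \<Longrightarrow> 1/(1+b) \<le> 1/(1+a)"
    by (simp add: frac_le)
  show ?thesis unfolding u_prior_def r_def[symmetric]
    using A B M[OF kx(1)] M[OF kx(2)] by blast
qed

lemma titu:
  fixes a b n1 n2 P1 P2 :: real
  assumes "P1 > 0" "P2 > 0" "a \<ge> 0" "b \<ge> 0"
  shows "(a*n1+b*n2)^2/(a*P1+b*P2) \<le> a*n1^2/P1 + b*n2^2/P2"
proof (cases "a*P1+b*P2 = 0")
  case True thus ?thesis using assms by (simp add: add_nonneg_nonneg)
next
  case False
  hence D: "a*P1+b*P2 > 0" using assms by (smt (verit) mult_nonneg_nonneg)
  have e: "(a*n1^2*P2 + b*n2^2*P1)*(a*P1+b*P2) - (a*n1+b*n2)^2*(P1*P2) = a*b*(n1*P2-n2*P1)^2"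
    by (simp add: power2_eq_square algebra_simps)
  have "0 \<le> a*b*(n1*P2-n2*P1)^2" using assms by simp
  hence le: "(a*n1+b*n2)^2*(P1*P2) \<le> (a*n1^2*P2 + b*n2^2*P1)*(a*P1+b*P2)" using e by linarith
  have r: "a*n1^2/P1 + b*n2^2/P2 = (a*n1^2*P2 + b*n2^2*P1)/(P1*P2)"
    using assms by (simp add: field_simps)
  show ?thesis unfolding r using D assms le
    by (simp add: frac_le_eq divide_le_eq le_divide_eq field_simps)
qed

lemma ql_convex:
  fixes p q m n :: real
  assumes "\<forall>u\<in>{0<..<1::real}. 0 < m + n*u"
  shows "convex_on {0<..<1} (\<lambda>u. (p+q*u)^2/(m+n*u))"
proof (rule convex_onI)
  fix t x y :: real assume t: "0 < t" "t < 1" and xy: "x \<in> {0<..<1}" "y \<in> {0<..<1}"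
  have P: "m+n*x > 0" "m+n*y > 0" using assms xy by auto
  have "(p + q * ((1 - t) *\<^sub>R x + t *\<^sub>R y))^2 / (m + n * ((1 - t) *\<^sub>R x + t *\<^sub>R y))
      = ((1-t)*(p+q*x) + t*(p+q*y))^2/((1-t)*(m+n*x) + t*(m+n*y))"
    by (simp add: algebra_simps)
  also have "\<dots> \<le> (1-t)*(p+q*x)^2/(m+n*x) + t*(p+q*y)^2/(m+n*y)"
    by (rule titu) (use P t in auto)
  finally show "(p + q * ((1 - t) *\<^sub>R x + t *\<^sub>R y))^2 / (m + n * ((1 - t) *\<^sub>R x + t *\<^sub>R y))
      \<le> (1 - t) * ((p + q * x)^2 / (m + n * x)) + t * ((p + q * y)^2 / (m + n * y))" by simp
qed (simp add: convex_real_interval)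

definition GG :: "real \<Rightarrow> real \<Rightarrow> real \<Rightarrow> real" where
  "GG C X Y = (C*(X+Y) - X)^2/(X+Y)"

lemma term_convex:
  fixes A B C :: real
  assumes "A \<ge> 0" "B \<ge> 0"
  shows "convex_on {0<..<1} (\<lambda>u. GG C (u*A) ((1-u)*B))"
proof (cases "A = 0 \<and> B = 0")
  case True thus ?thesis by (simp add: GG_def convex_on_const)
next
  case False
  have e: "(\<lambda>u. GG C (u*A) ((1-u)*B)) = (\<lambda>u. (C*B + (C*A - C*B - A)*u)^2/(B + (A-B)*u))"
    by (rule ext) (simp add: GG_def algebra_simps)
  have "\<forall>u\<in>{0<..<1::real}. 0 < B + (A-B)*u"
  proof
    fix u :: real assume u: "u \<in> {0<..<1}"
    have "B + (A-B)*u = u*A + (1-u)*B" by (simp add: algebra_simps)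
    moreover have "0 < u*A + (1-u)*B"
    proof (cases "A = 0")
      case True hence "B > 0" using False assms by auto
      thus ?thesis using u True by simp
    next
      case False hence "A > 0" using assms by auto
      thus ?thesis using u assms by (simp add: add_pos_nonneg)
    qed
    ultimately show "0 < B + (A-B)*u" by simp
  qed
  thus ?thesis unfolding e by (rule ql_convex)
qed

lemma sig_nonneg: "p \<in> {0..1} \<Longrightarrow> sig_prob p s \<ge> 0"
  by (auto simp: sig_prob_def)

lemma pointwise:
  assumes u: "u \<in> {0<..<1}" and ab: "a1 \<in> {0..1}" "b1 \<in> {0..1}" "a2 \<in> {0..1}" "b2 \<in> {0..1}"
  shows "(\<Sum>w\<in>(UNIV::bool set). joint_prob u a1 b1 a2 b2 w s1 s2 *
        (sq_loss C w - sq_loss (fstar u a1 b1 a2 b2 s1 s2) w))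
     = GG C (u*(sig_prob a1 s1 * sig_prob a2 s2)) ((1-u)*(sig_prob b1 s1 * sig_prob b2 s2))"
proof -
  define X where "X = u*(sig_prob a1 s1 * sig_prob a2 s2)"
  define Y where "Y = (1-u)*(sig_prob b1 s1 * sig_prob b2 s2)"
  have X: "X \<ge> 0" using u ab by (simp add: X_def sig_nonneg)
  have Y: "Y \<ge> 0" using u ab by (simp add: Y_def sig_nonneg)
  have j1: "joint_prob u a1 b1 a2 b2 True s1 s2 = X"
    by (simp add: joint_prob_def state_prob_def X_def)
  have j0: "joint_prob u a1 b1 a2 b2 False s1 s2 = Y"
    by (simp add: joint_prob_def state_prob_def Y_def)
  have fs: "fstar u a1 b1 a2 b2 s1 s2 = X/(X+Y)"
    by (simp add: fstar_def X_def Y_def mult.assoc)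
  have "(\<Sum>w\<in>(UNIV::bool set). joint_prob u a1 b1 a2 b2 w s1 s2 *
        (sq_loss C w - sq_loss (fstar u a1 b1 a2 b2 s1 s2) w))
     = X*((C-1)^2 - (X/(X+Y) - 1)^2) + Y*(C^2 - (X/(X+Y))^2)"
    by (simp add: UNIV_bool j1 j0 fs sq_loss_def)
  also have "\<dots> = GG C X Y" unfolding GG_def by (rule key_alg[OF X Y])
  finally show ?thesis by (simp add: X_def Y_def)
qed

theorem mainTheorem3:
  fixes f :: "real \<Rightarrow> real \<Rightarrow> real" and \<mu> a1 b1 a2 b2 :: real
  assumes "\<forall>x\<in>{0..1}. \<forall>y\<in>{0..1}. f x y \<in> {0..1}"
    and "in_Theta4 \<mu> a1 b1 a2 b2"
  shows "single_troughed_on {0<..1} (phi f \<mu> a1 b1 a2 b2)"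
proof -
  have m: "0 < \<mu>" "\<mu> < 1" and ab: "a1 \<in> {0..1}" "b1 \<in> {0..1}" "a2 \<in> {0..1}" "b2 \<in> {0..1}"
    using assms(2) by (auto simp: in_Theta4_def)
  define Cc where "Cc s1 s2 = f (report \<mu> a1 b1 1 s1) (report \<mu> a2 b2 1 s2)" for s1 s2
  define T where "T s1 s2 u = GG (Cc s1 s2) (u*(sig_prob a1 s1 * sig_prob a2 s2))
       ((1-u)*(sig_prob b1 s1 * sig_prob b2 s2))" for s1 s2 u
  define H where "H u = T True True u + T True False u + T False True u + T False False u" for u
  have Tc: "convex_on {0<..<1} (T s1 s2)" for s1 s2
    unfolding T_def[abs_def] by (rule term_convex) (use ab in \<open>auto simp: sig_nonneg\<close>)
  have Hc: "convex_on {0<..<1} H"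
    unfolding H_def[abs_def] by (intro convex_on_add Tc)
  have phi_eq: "phi f \<mu> a1 b1 a2 b2 lam = H (u_prior \<mu> lam)" if l: "0 < lam" for lam
  proof -
    have u: "u_prior \<mu> lam \<in> {0<..<1}" using u_range m l by blast
    have "phi f \<mu> a1 b1 a2 b2 lam =
      (\<Sum>w\<in>(UNIV::bool set). \<Sum>s1\<in>(UNIV::bool set). \<Sum>s2\<in>(UNIV::bool set).
        joint_prob (u_prior \<mu> lam) a1 b1 a2 b2 w s1 s2 *
        (sq_loss (Cc s1 s2) w - sq_loss (fstar (u_prior \<mu> lam) a1 b1 a2 b2 s1 s2) w))"
      unfolding phi_def Let_def Cc_def using report_u[OF m l] by simp
    also have "\<dots> = (\<Sum>s1\<in>(UNIV::bool set). \<Sum>s2\<in>(UNIV::bool set). \<Sum>w\<in>(UNIV::bool set).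
        joint_prob (u_prior \<mu> lam) a1 b1 a2 b2 w s1 s2 *
        (sq_loss (Cc s1 s2) w - sq_loss (fstar (u_prior \<mu> lam) a1 b1 a2 b2 s1 s2) w))"
      by (simp add: UNIV_bool algebra_simps)
    also have "\<dots> = (\<Sum>s1\<in>(UNIV::bool set). \<Sum>s2\<in>(UNIV::bool set). T s1 s2 (u_prior \<mu> lam))"
      unfolding T_def using pointwise[OF u ab] by simp
    also have "\<dots> = H (u_prior \<mu> lam)" by (simp add: UNIV_bool H_def algebra_simps)
    finally show ?thesis .
  qed
  have Hcont: "continuous_on {0<..<1} H"
    by (rule convex_on_continuous) (use Hc in auto)
  have ucont: "continuous_on {0<..1} (u_prior \<mu>)"
  proof -
    have "\<forall>x\<in>{0<..1::real}. 1 + ((1 - \<mu>) / \<mu>) powr (1 / x) \<noteq> 0"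
      by (smt (verit) powr_ge_zero)
    hence "continuous_on {0<..1::real} (\<lambda>x. 1 / (1 + ((1 - \<mu>) / \<mu>) powr (1 / x)))"
      using m by (intro continuous_intros) auto
    thus ?thesis unfolding u_prior_def[abs_def] .
  qed
  have cont: "continuous_on {0<..1} (phi f \<mu> a1 b1 a2 b2)"
  proof -
    have "continuous_on {0<..1} (\<lambda>x. H (u_prior \<mu> x))"
      by (rule continuous_on_compose2[OF Hcont ucont]) (use u_range m in auto)
    thus ?thesis by (rule continuous_on_cong[THEN iffD1, rotated 2]) (auto simp: phi_eq)
  qed
  show ?thesis
  proof (rule qc_single[OF _ cont])
    fix x y z :: real assume xyz: "x \<in> {0<..1}" "z \<in> {0<..1}" "x \<le> y" "y \<le> z"
    have pos: "0 < x" "0 < y" "0 < z" using xyz by auto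
    have U: "u_prior \<mu> x \<in> {0<..<1}" "u_prior \<mu> z \<in> {0<..<1}" using u_range m pos by blast+
    have "H (u_prior \<mu> y) \<le> max (H (u_prior \<mu> x)) (H (u_prior \<mu> z))"
    proof (cases "\<mu> \<le> 1/2")
      case True
      thus ?thesis using u_mono[OF m pos(1) xyz(3)] u_mono[OF m pos(2) xyz(4)]
        by (intro convex_max[OF Hc U]) auto
    next
      case False
      thus ?thesis using u_mono[OF m pos(1) xyz(3)] u_mono[OF m pos(2) xyz(4)] convex_max[OF Hc U(2) U(1)]
        by (auto simp: max.commute)
    qed
    thus "phi f \<mu> a1 b1 a2 b2 y \<le> max (phi f \<mu> a1 b1 a2 b2 x) (phi f \<mu> a1 b1 a2 b2 z)"
      using pos by (simp add: phi_eq)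
  qed
qed

end
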